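(* Fix integers $T,C,K\ge 1$, lengths $T_2,\dots,T_K\ge 1$, and the following data. (a) A linear map $W_\theta:\mathbb{R}^{T\times C}\to\mathbb{R}^{N}$ (a short-time Fourier transform) with constants $0<A\le B<\infty$ such that $\sqrt{A}\|\bm Y\|_2\le\|W_\theta(\bm Y)\|_2\le\sqrt{B}\|\bm Y\|_2$ for all $\bm Y\in\mathbb{R}^{T\times C}$. (b) For each $k=2,\dots,K$ a fixed linear upsampling operator $\operatorname{Up}_T:\mathbb{R}^{T_k}\to\mathbb{R}^{T}$. (c) A moving-average smoother $\mathrm{MA}_\kappa:\mathbb{R}^T\to\mathbb{R}^T$ of the form $(\mathrm{MA}_\kappa u)(t)=\sum_{s\in\mathcal W_t} w_{t,s}u(s)$, where $\mathcal W_t\subseteq\{1,\dots,T\}$ is the averaging window of $t$ and the weights satisfy $w_{t,s}\ge 0$, $\sum_{s\in\mathcal W_t}w_{t,s}=1$; assume moreover there is $\rho_\kappa\ge 1$ with $\langle(\mathrm{MA}_\kappa u)(t)\rangle_t\le\rho_\kappa\langle u(t)\rangle_t$ for every nonnegative sequence $u$. (d) Nonnegative score weights $\alpha_f,\alpha_t,\alpha_g,\alpha_c,\alpha_{\mathrm{cyc}},\alpha_{\mathrm{ms}}$ and positive loss weights $\omega_2,\dots,\omega_K,\omega_{\mathrm{full}}$ with $\sum_{k=2}^K\omega_k+\omega_{\mathrm{full}}=1$. For arrays $\bm X,\hat{\bm X},\hat{\bm X}_{\leftarrow f},\hat{\bm X}_{\mathrm{ms}}\in\mathbb{R}^{T\times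 C}$, arrays $\bm X^{(k)},\hat{\bm X}^{(k)}_{\mathrm{ms}}\in\mathbb{R}^{T_k\times C}$ ($k=2,\dots,K$) and a real sequence $g(t)$, $t=1,\dots,T$, put $\bm S=W_\theta(\bm X)$, $\hat{\bm S}_{\rightarrow f}=W_\theta(\hat{\bm X})$, $c(t)=|\hat{\bm X}_{\mathrm{ms}}(t)-\hat{\bm X}_{\leftarrow f}(t)|$ and \[ \mathcal{L}_{\mathrm{ms}}=\sum_{k=2}^K\omega_k\,l(\hat{\bm X}^{(k)}_{\mathrm{ms}},\bm X^{(k)})+\omega_{\mathrm{full}}\,l(\hat{\bm X}_{\mathrm{ms}},\bm X),\quad \mathcal{L}_{\mathrm{cyc}}=l(\hat{\bm S}_{\rightarrow f},\bm S)+l(\hat{\bm X}_{\leftarrow f},\bm X),\quad \mathcal{L}_{\mathrm{cons}}=l(\hat{\bm X}_{\mathrm{ms}},\hat{\bm X}_{\leftarrow f}), \] \[ \tilde{\mathcal A}_{\mathrm{cyc}}(t)=\alpha_f|\hat{\bm X}_{\leftarrow f}(t)-\bm X(t)|+\alpha_t|\hat{\bm X}(t)-\bm X(t)|+\alpha_g|g(t)|+\alpha_c c(t),\qquad \mathcal A_{\mathrm{cyc}}=\mathrm{MA}_\kappa(\tilde{\mathcal A}_{\mathrm{cyc}}), \] \[ \mathcal A_{\mathrm{ms}}(t)=|\hat{\bm X}_{\mathrm{ms}}(t)-\bm X(t)|+\sum_{k=2}^K\operatorname{Up}_T\big(|\hat{\bm X}^{(k)}_{\mathrm{ms}}-\bm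 X^{(k)}|\big)(t),\qquad \mathcal A(t)=\alpha_{\mathrm{cyc}}\mathcal A_{\mathrm{cyc}}(t)+\alpha_{\mathrm{ms}}\mathcal A_{\mathrm{ms}}(t). \] Then: (1) There exist constants $\kappa_{\mathrm{ms}},\kappa_{\mathrm{cyc}},\kappa_{\mathrm{cons}},\kappa_g,\kappa_0\ge 0$, not depending on the arrays $\bm X,\hat{\bm X},\hat{\bm X}_{\leftarrow f},\hat{\bm X}_{\mathrm{ms}},\bm X^{(k)},\hat{\bm X}^{(k)}_{\mathrm{ms}}$ or on $g$ (only on the fixed weights, dimensions and scales, operators, and $\rho_\kappa$), such that whenever $\mathcal L_{\mathrm{ms}}\le\varepsilon_{\mathrm{ms}}$, $\mathcal L_{\mathrm{cyc}}\le\varepsilon_{\mathrm{cyc}}$ and $\mathcal L_{\mathrm{cons}}\le\varepsilon_{\mathrm{cons}}$, \[ \langle\mathcal A(t)\rangle_t\le\kappa_{\mathrm{ms}}\varepsilon_{\mathrm{ms}}+\rho_\kappa\kappa_{\mathrm{cyc}}\varepsilon_{\mathrm{cyc}}+\rho_\kappa\kappa_{\mathrm{cons}}\varepsilon_{\mathrm{cons}}+\rho_\kappa\kappa_g\alpha_g\langle|g(t)|\rangle_t+\kappa_0 . \] (2) Let $\Omega\subseteq\{1,\dots,T\}$ be nonempty. If $\langle|\hat{\bm X}(t)-\bm X(t)|\rangle_{t\in\Omega}\ge\delta_t$, $\langle|\hat{\bm X}_{\leftarrow f}(t)-\bm X(t)|\rangle_{t\in\Omega}\ge\delta_f$ and $\langle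 c(t)\rangle_{t\in\Omega}\ge\delta_c$, then $\langle\tilde{\mathcal A}_{\mathrm{cyc}}(t)\rangle_{t\in\Omega}\ge\alpha_t\delta_t+\alpha_f\delta_f+\alpha_c\delta_c$. (3) If moreover $|\hat{\bm X}(t)-\bm X(t)|\ge\delta_t$, $|\hat{\bm X}_{\leftarrow f}(t)-\bm X(t)|\ge\delta_f$ and $c(t)\ge\delta_c$ for all $t\in\Omega$, then for every $t\in\Omega$ with $\mathcal W_t\subseteq\Omega$ one has $\mathcal A_{\mathrm{cyc}}(t)\ge\alpha_t\delta_t+\alpha_f\delta_f+\alpha_c\delta_c$. (4) If $\bm p_t(t),\tilde{\bm p}_f(t)$ ($t\in\Omega$) are probability vectors on a common finite set with $\|\bm p_t(t)-\tilde{\bm p}_f(t)\|_1\ge\delta_p$ for all $t\in\Omega$, then $d(t)=\mathrm{JS}(\bm p_t(t),\tilde{\bm p}_f(t))$ satisfies $\langle d(t)\rangle_{t\in\Omega}\ge\frac18\delta_p^2$.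
   Context: $\|\cdot\|_2$ is the Euclidean (Frobenius) norm of an array. For an array $\bm Y$ with rows indexed by time, $|\bm Y(t)|$ denotes the sum of absolute values of the entries in row $t$ (a nonnegative scalar per timestamp); $|\hat{\bm X}^{(k)}_{\mathrm{ms}}-\bm X^{(k)}|$ is the resulting length-$T_k$ sequence. $\langle u(t)\rangle_t=\frac1T\sum_{t=1}^T u(t)$ and $\langle u(t)\rangle_{t\in\Omega}=\frac1{|\Omega|}\sum_{t\in\Omega}u(t)$. The loss $l(\hat{\bm Y},\bm Y)$ is the mean over all entries of the SmoothL1 (Huber) function $\psi(r)=\tfrac12 r^2$ if $|r|<1$ and $\psi(r)=|r|-\tfrac12$ otherwise, applied to the entrywise difference $r=\hat Y-Y$. $\mathrm{JS}(p,q)=\tfrac12\mathrm{KL}(p\|m)+\tfrac12\mathrm{KL}(q\|m)$ with $m=\tfrac12(p+q)$ is the Jensen–Shannon divergence (natural logarithm). In the paper $\hat{\bm X}$ is the time-domain decoder output, $\hat{\bm X}_{\leftarrow f}$ the inverse-STFT of the predicted spectrum, $\hat{\bm X}_{\mathrm{ms}}$ the multi-scale reconstruction, $\bm X^{(k)}$ the band-limited downsampled scales, and $g(t)$ an uncertainty gate; the lemma holds for arbitrary such arrays. *)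

theory Defs
  imports Complex_Main
begin

text \<open>Time indices range over {1..T}, channel indices over {1..C},
  scale indices over {2..K}, spectral coefficients over {1..N}.
  Arrays in R^(T x C) are functions nat => nat => real (time, channel);
  only their values on the index box matter. Linear maps between finite-dimensional
  coordinate spaces are given by their coefficient matrices.\<close>

definition huber :: "real \<Rightarrow> real" where
  "huber r = (if \<bar>r\<bar> < 1 then r\<^sup>2 / 2 else \<bar>r\<bar> - 1/2)"

text \<open>SmoothL1 loss l(Yhat, Y): mean over all entries of huber(Yhat - Y).\<close>
definition loss_arr :: "nat \<Rightarrow> nat \<Rightarrow> (nat \<Rightarrow> nat \<Rightarrow> real) \<Rightarrow> (nat \<Rightarrow> nat \<Rightarrow> real) \<Rightarrow> real" where
  "loss_arr T C Yh Y = (\<Sum>t\<in>{1..T}. \<Sum>c\<in>{1..C}. huber (Yh t c - Y t c)) / real (T * C)"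

definition loss_vec :: "nat \<Rightarrow> (nat \<Rightarrow> real) \<Rightarrow> (nat \<Rightarrow> real) \<Rightarrow> real" where
  "loss_vec N vh v = (\<Sum>n\<in>{1..N}. huber (vh n - v n)) / real N"

definition frob :: "nat \<Rightarrow> nat \<Rightarrow> (nat \<Rightarrow> nat \<Rightarrow> real) \<Rightarrow> real" where
  "frob T C Y = sqrt (\<Sum>t\<in>{1..T}. \<Sum>c\<in>{1..C}. (Y t c)\<^sup>2)"

definition vnorm :: "nat \<Rightarrow> (nat \<Rightarrow> real) \<Rightarrow> real" where
  "vnorm N v = sqrt (\<Sum>n\<in>{1..N}. (v n)\<^sup>2)"

definition lin_map :: "(nat \<Rightarrow> nat \<Rightarrow> nat \<Rightarrow> real) \<Rightarrow> nat \<Rightarrow> nat \<Rightarrow> (nat \<Rightarrow> nat \<Rightarrow> real) \<Rightarrow> nat \<Rightarrow> real" where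
  "lin_map Wc T C Y n = (\<Sum>t\<in>{1..T}. \<Sum>c\<in>{1..C}. Wc n t c * Y t c)"

definition upsample :: "(nat \<Rightarrow> nat \<Rightarrow> real) \<Rightarrow> nat \<Rightarrow> (nat \<Rightarrow> real) \<Rightarrow> nat \<Rightarrow> real" where
  "upsample U Tk u t = (\<Sum>s\<in>{1..Tk}. U t s * u s)"

definition mov_avg :: "(nat \<Rightarrow> nat set) \<Rightarrow> (nat \<Rightarrow> nat \<Rightarrow> real) \<Rightarrow> (nat \<Rightarrow> real) \<Rightarrow> nat \<Rightarrow> real" where
  "mov_avg Win w u t = (\<Sum>s\<in>Win t. w t s * u s)"

definition arr_diff :: "(nat \<Rightarrow> nat \<Rightarrow> real) \<Rightarrow> (nat \<Rightarrow> nat \<Rightarrow> real) \<Rightarrow> nat \<Rightarrow> nat \<Rightarrow> real" where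
  "arr_diff Y Z = (\<lambda>t c. Y t c - Z t c)"

text \<open>|Y(t)|: sum of absolute values of the entries of row t.\<close>
definition row_abs :: "nat \<Rightarrow> (nat \<Rightarrow> nat \<Rightarrow> real) \<Rightarrow> nat \<Rightarrow> real" where
  "row_abs C Y t = (\<Sum>c\<in>{1..C}. \<bar>Y t c\<bar>)"

definition avg :: "nat \<Rightarrow> (nat \<Rightarrow> real) \<Rightarrow> real" where
  "avg T u = (\<Sum>t\<in>{1..T}. u t) / real T"

definition avg_on :: "nat set \<Rightarrow> (nat \<Rightarrow> real) \<Rightarrow> real" where
  "avg_on \<Omega> u = (\<Sum>t\<in>\<Omega>. u t) / real (card \<Omega>)"

definition L_ms :: "nat \<Rightarrow> nat \<Rightarrow> nat \<Rightarrow> (nat \<Rightarrow> nat) \<Rightarrow> (nat \<Rightarrow> real) \<Rightarrow> real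
    \<Rightarrow> (nat \<Rightarrow> nat \<Rightarrow> real) \<Rightarrow> (nat \<Rightarrow> nat \<Rightarrow> real)
    \<Rightarrow> (nat \<Rightarrow> nat \<Rightarrow> nat \<Rightarrow> real) \<Rightarrow> (nat \<Rightarrow> nat \<Rightarrow> nat \<Rightarrow> real) \<Rightarrow> real" where
  "L_ms T C K Tk \<omega> \<omega>full X Xms Xk Xmsk =
     (\<Sum>k\<in>{2..K}. \<omega> k * loss_arr (Tk k) C (Xmsk k) (Xk k)) + \<omega>full * loss_arr T C Xms X"

definition L_cyc :: "nat \<Rightarrow> nat \<Rightarrow> nat \<Rightarrow> (nat \<Rightarrow> nat \<Rightarrow> nat \<Rightarrow> real)
    \<Rightarrow> (nat \<Rightarrow> nat \<Rightarrow> real) \<Rightarrow> (nat \<Rightarrow> nat \<Rightarrow> real) \<Rightarrow> (nat \<Rightarrow> nat \<Rightarrow> real) \<Rightarrow> real" where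
  "L_cyc T C N Wc X Xh Xf =
     loss_vec N (lin_map Wc T C Xh) (lin_map Wc T C X) + loss_arr T C Xf X"

definition L_cons :: "nat \<Rightarrow> nat \<Rightarrow> (nat \<Rightarrow> nat \<Rightarrow> real) \<Rightarrow> (nat \<Rightarrow> nat \<Rightarrow> real) \<Rightarrow> real" where
  "L_cons T C Xms Xf = loss_arr T C Xms Xf"

definition A_tilde_cyc :: "nat \<Rightarrow> real \<Rightarrow> real \<Rightarrow> real \<Rightarrow> real
    \<Rightarrow> (nat \<Rightarrow> nat \<Rightarrow> real) \<Rightarrow> (nat \<Rightarrow> nat \<Rightarrow> real) \<Rightarrow> (nat \<Rightarrow> nat \<Rightarrow> real) \<Rightarrow> (nat \<Rightarrow> nat \<Rightarrow> real)
    \<Rightarrow> (nat \<Rightarrow> real) \<Rightarrow> nat \<Rightarrow> real" where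
  "A_tilde_cyc C \<alpha>f \<alpha>t \<alpha>g \<alpha>c X Xh Xf Xms g t =
     \<alpha>f * row_abs C (arr_diff Xf X) t + \<alpha>t * row_abs C (arr_diff Xh X) t
     + \<alpha>g * \<bar>g t\<bar> + \<alpha>c * row_abs C (arr_diff Xms Xf) t"

definition A_ms :: "nat \<Rightarrow> nat \<Rightarrow> (nat \<Rightarrow> nat \<Rightarrow> nat \<Rightarrow> real) \<Rightarrow> (nat \<Rightarrow> nat)
    \<Rightarrow> (nat \<Rightarrow> nat \<Rightarrow> real) \<Rightarrow> (nat \<Rightarrow> nat \<Rightarrow> real)
    \<Rightarrow> (nat \<Rightarrow> nat \<Rightarrow> nat \<Rightarrow> real) \<Rightarrow> (nat \<Rightarrow> nat \<Rightarrow> nat \<Rightarrow> real) \<Rightarrow> nat \<Rightarrow> real" where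
  "A_ms C K U Tk X Xms Xk Xmsk t =
     row_abs C (arr_diff Xms X) t
     + (\<Sum>k\<in>{2..K}. upsample (U k) (Tk k) (row_abs C (arr_diff (Xmsk k) (Xk k))) t)"

definition prob_vec :: "'a set \<Rightarrow> ('a \<Rightarrow> real) \<Rightarrow> bool" where
  "prob_vec S p \<longleftrightarrow> (\<forall>x\<in>S. 0 \<le> p x) \<and> (\<Sum>x\<in>S. p x) = 1"

definition KL :: "'a set \<Rightarrow> ('a \<Rightarrow> real) \<Rightarrow> ('a \<Rightarrow> real) \<Rightarrow> real" where
  "KL S p q = (\<Sum>x\<in>S. if p x = 0 then 0 else p x * ln (p x / q x))"

definition JS :: "'a set \<Rightarrow> ('a \<Rightarrow> real) \<Rightarrow> ('a \<Rightarrow> real) \<Rightarrow> real" where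
  "JS S p q = (let m = (\<lambda>x. (p x + q x) / 2) in KL S p m / 2 + KL S q m / 2)"

definition l1dist :: "'a set \<Rightarrow> ('a \<Rightarrow> real) \<Rightarrow> ('a \<Rightarrow> real) \<Rightarrow> real" where
  "l1dist S p q = (\<Sum>x\<in>S. \<bar>p x - q x\<bar>)"

end

theory Submission
  imports Defs "HOL-Analysis.L2_Norm" "HOL-Analysis.Convex"
begin


lemma psi_ge:
  fixes u :: real assumes "0 \<le> u" "u < 1"
  shows "2*u \<le> ln(1+u) - ln(1-u)"
proof -
  let ?f = "\<lambda>x::real. ln(1+x) - ln(1-x) - 2*x"
  have "?f 0 \<le> ?f u"
  proof (rule DERIV_nonneg_imp_increasing_open[OF assms(1)])
    fix x :: real assume x: "0 < x" "x < u"
    then have "DERIV ?f x :> (1/(1+x) - (-1)/(1-x) - 2)"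
      using assms by (auto intro!: derivative_eq_intros)
    moreover have "1/(1+x) - (-1)/(1-x) - 2 \<ge> 0"
    proof -
      have "1+x > 0" "1-x > 0" using x assms by auto
      moreover have "x*x < 1*1" using x assms by (intro mult_strict_mono) auto
      ultimately have "1/(1+x) - (-1)/(1-x) - 2 = 2*x^2/((1+x)*(1-x))"
        by (simp add: field_simps power2_eq_square)
      also have "\<dots> \<ge> 0" using x assms by (intro divide_nonneg_pos) auto
      finally show ?thesis .
    qed
    ultimately show "\<exists>y. DERIV ?f x :> y \<and> 0 \<le> y" by blast
  next
    show "continuous_on {0..u} ?f"
      using assms by (auto intro!: continuous_intros)
  qed
  then show ?thesis by simp
qed

lemma phi_ge:
  fixes u :: real assumes "0 \<le> u" "u < 1"
  shows "u^2 \<le> (1+u)*ln(1+u) + (1-u)*ln(1-u)"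
proof -
  let ?f = "\<lambda>x::real. (1+x)*ln(1+x) + (1-x)*ln(1-x) - x^2"
  have "?f 0 \<le> ?f u"
  proof (rule DERIV_nonneg_imp_increasing_open[OF assms(1)])
    fix x :: real assume x: "0 < x" "x < u"
    then have "DERIV ?f x :> (1 * ln(1+x) + (1+x)*(1/(1+x)) + ((-1)*ln(1-x) + (1-x)*((-1)/(1-x))) - 2*x)"
      using assms by (auto intro!: derivative_eq_intros)
    moreover have "(1 * ln(1+x) + (1+x)*(1/(1+x)) + ((-1)*ln(1-x) + (1-x)*((-1)/(1-x))) - 2*x) = ln(1+x) - ln(1-x) - 2*x"
      using x assms by simp
    moreover have "ln(1+x) - ln(1-x) - 2*x \<ge> 0" using psi_ge[of x] x assms by simp
    ultimately show "\<exists>y. DERIV ?f x :> y \<and> 0 \<le> y" by metis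
  next
    show "continuous_on {0..u} ?f"
      using assms by (auto intro!: continuous_intros)
  qed
  then show ?thesis by simp
qed

lemma ln2_ge: "1/2 \<le> ln (2::real)"
proof -
  have "ln (1 - 1/2::real) \<le> - (1/2)" by (rule ln_one_minus_pos_upper_bound) auto
  moreover have "ln (1 - 1/2::real) = - ln 2" by (simp add: ln_div)
  ultimately show ?thesis by simp
qed

lemma pair_pos:
  fixes a b :: real assumes "0 < a" "0 < b" "b \<le> a"
  shows "(a-b)^2/(4*(a+b)) \<le> a * ln (a/((a+b)/2)) / 2 + b * ln (b/((a+b)/2)) / 2"
proof -
  define u where "u = (a-b)/(a+b)"
  have u0: "0 \<le> u" "u < 1" using assms by (auto simp: u_def field_simps)
  have p: "1+u = a/((a+b)/2)" "1-u = b/((a+b)/2)" using assms by (auto simp: u_def field_simps)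
  have "u^2 \<le> (1+u)*ln(1+u) + (1-u)*ln(1-u)" by (rule phi_ge[OF u0])
  then have "(a+b)/4 * u^2 \<le> (a+b)/4 * ((1+u)*ln(1+u) + (1-u)*ln(1-u))"
    using assms by (intro mult_left_mono) auto
  moreover have "(a+b)/4 * u^2 = (a-b)^2/(4*(a+b))"
  proof -
    have "u^2 = (a-b)^2/(a+b)^2" by (simp add: u_def power_divide)
    have gen0: "\<And>c s::real. s > 0 \<Longrightarrow> s/4 * (c/(s*s)) = c/(4*s)" by (simp add: field_simps)
    have gen: "\<And>c. (a+b)/4 * (c/((a+b)*(a+b))) = c/(4*(a+b))" using assms by (intro gen0) auto
    show ?thesis unfolding \<open>u^2 = _\<close> power2_eq_square[of "a+b"] gen ..
  qed
  moreover have "(a+b)/4 * ((1+u)*ln(1+u) + (1-u)*ln(1-u)) = a * ln (a/((a+b)/2)) / 2 + b * ln (b/((a+b)/2)) / 2"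
  proof -
    have gen0: "\<And>s L1 L2::real. s > 0 \<Longrightarrow> s/4*((a/(s/2))*L1 + (b/(s/2))*L2) = a*L1/2 + b*L2/2"
      by (simp add: field_simps)
    show ?thesis unfolding p using assms by (intro gen0) auto
  qed
  ultimately show ?thesis by linarith
qed

definition gJS :: "real \<Rightarrow> real \<Rightarrow> real" where
  "gJS a b = (if a = 0 then 0 else a * ln (a/((a+b)/2))) / 2 + (if b = 0 then 0 else b * ln (b/((a+b)/2))) / 2"

lemma gJS_sym: "gJS a b = gJS b a" unfolding gJS_def by (simp add: add.commute)

lemma gJS_ge_ord:
  fixes a b :: real assumes "0 \<le> b" "b \<le> a"
  shows "(a-b)^2/(4*(a+b)) \<le> gJS a b"
proof (cases "b = 0")
  case True
  show ?thesis
  proof (cases "a = 0")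
    case True with \<open>b=0\<close> show ?thesis by (simp add: gJS_def)
  next
    case False
    then have a: "a > 0" using assms by simp
    have "a * (1/2) \<le> a * ln 2" using ln2_ge a by (intro mult_left_mono) auto
    then show ?thesis using True a by (simp add: gJS_def power2_eq_square field_simps)
  qed
next
  case False
  then have "0 < b" "0 < a" using assms by auto
  then show ?thesis using pair_pos[of a b] assms by (simp add: gJS_def)
qed

lemma gJS_ge:
  fixes a b :: real assumes "0 \<le> a" "0 \<le> b"
  shows "(a-b)^2/(4*(a+b)) \<le> gJS a b"
proof (cases "b \<le> a")
  case True then show ?thesis using gJS_ge_ord assms by simp
next
  case False
  then have "(b-a)^2/(4*(b+a)) \<le> gJS b a" using gJS_ge_ord assms by simp
  then show ?thesis by (simp add: gJS_sym power2_commute add.commute)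
qed


lemma JS_sum: "JS S p q = (\<Sum>x\<in>S. gJS (p x) (q x))"
  by (simp add: JS_def KL_def gJS_def Let_def sum_divide_distrib sum.distrib)

lemma JS_ge:
  fixes S :: "'a set" and p q :: "'a \<Rightarrow> real"
  assumes S: "finite S" and p: "prob_vec S p" and q: "prob_vec S q"
  shows "(l1dist S p q)^2 / 8 \<le> JS S p q"
proof -
  have pn: "\<forall>x\<in>S. 0 \<le> p x" and ps: "(\<Sum>x\<in>S. p x) = 1" using p by (auto simp: prob_vec_def)
  have qn: "\<forall>x\<in>S. 0 \<le> q x" and qs: "(\<Sum>x\<in>S. q x) = 1" using q by (auto simp: prob_vec_def)
  define f where "f x = \<bar>p x - q x\<bar> / sqrt (p x + q x)" for x
  define h where "h x = sqrt (p x + q x)" for x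
  have fh: "f x * h x = \<bar>p x - q x\<bar>" if "x \<in> S" for x
  proof (cases "p x + q x = 0")
    case True then have "p x = 0" "q x = 0" using pn qn that by force+
    then show ?thesis by (simp add: f_def h_def)
  next
    case False then have "sqrt (p x + q x) > 0" using pn qn that
      by (metis add_nonneg_nonneg order_le_less real_sqrt_gt_zero)
    then show ?thesis by (simp add: f_def h_def)
  qed
  have f2: "(f x)^2 = (p x - q x)^2 / (p x + q x)" if "x \<in> S" for x
    using pn qn that by (simp add: f_def power_divide)
  have h2: "(h x)^2 = p x + q x" if "x \<in> S" for x
    using pn qn that by (simp add: h_def)
  have "(l1dist S p q)^2 = (\<Sum>x\<in>S. f x * h x)^2"
    unfolding l1dist_def by (simp add: fh)
  also have "\<dots> \<le> (\<Sum>x\<in>S. (f x)^2) * (\<Sum>x\<in>S. (h x)^2)"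
    by (rule Cauchy_Schwarz_ineq_sum)
  also have "(\<Sum>x\<in>S. (h x)^2) = 2" using ps qs by (simp add: h2 sum.distrib)
  also have "(\<Sum>x\<in>S. (f x)^2) = (\<Sum>x\<in>S. (p x - q x)^2 / (p x + q x))" by (simp add: f2)
  finally have l: "(l1dist S p q)^2 / 8 \<le> (\<Sum>x\<in>S. (p x - q x)^2 / (p x + q x)) / 4" by simp
  also have "\<dots> = (\<Sum>x\<in>S. (p x - q x)^2 / (4 * (p x + q x)))"
    by (simp add: sum_divide_distrib mult.commute)
  also have "\<dots> \<le> (\<Sum>x\<in>S. gJS (p x) (q x))"
    using pn qn by (intro sum_mono gJS_ge) auto
  finally show ?thesis by (simp add: JS_sum)
qed

lemma part4:
  fixes S :: "'a set" and pt pf :: "nat \<Rightarrow> 'a \<Rightarrow> real"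
  assumes "finite S" "\<Omega> \<subseteq> {1..T}" "\<Omega> \<noteq> {}" "0 \<le> \<delta>p"
    "\<forall>t\<in>\<Omega>. prob_vec S (pt t) \<and> prob_vec S (pf t) \<and> l1dist S (pt t) (pf t) \<ge> \<delta>p"
  shows "avg_on \<Omega> (\<lambda>t. JS S (pt t) (pf t)) \<ge> \<delta>p\<^sup>2 / 8"
proof -
  have fin: "finite \<Omega>" using assms(2) finite_subset by blast
  then have cp: "card \<Omega> > 0" using assms(3) by (simp add: card_gt_0_iff)
  have each: "\<delta>p\<^sup>2 / 8 \<le> JS S (pt t) (pf t)" if "t \<in> \<Omega>" for t
  proof -
    have "\<delta>p\<^sup>2 \<le> (l1dist S (pt t) (pf t))^2"
      using assms(4,5) that by (intro power_mono) auto
    then show ?thesis using JS_ge[of S "pt t" "pf t"] assms(1,5) that by simp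
  qed
  have "real (card \<Omega>) * (\<delta>p\<^sup>2 / 8) \<le> (\<Sum>t\<in>\<Omega>. JS S (pt t) (pf t))"
    using sum_mono[OF each] by simp
  then show ?thesis using cp unfolding avg_on_def by (simp add: field_simps)
qed



lemma row_abs_nonneg: "0 \<le> row_abs C Y t"
  unfolding row_abs_def by (simp add: sum_nonneg)

lemma At_eq: "A_tilde_cyc C \<alpha>f \<alpha>t \<alpha>g \<alpha>c X Xh Xf Xms g =
  (\<lambda>t. \<alpha>f * row_abs C (arr_diff Xf X) t + \<alpha>t * row_abs C (arr_diff Xh X) t
     + \<alpha>g * \<bar>g t\<bar> + \<alpha>c * row_abs C (arr_diff Xms Xf) t)"
  by (rule ext) (simp add: A_tilde_cyc_def)

lemma At_nonneg:
  assumes "0 \<le> \<alpha>f" "0 \<le> \<alpha>t" "0 \<le> \<alpha>g" "0 \<le> \<alpha>c"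
  shows "0 \<le> A_tilde_cyc C \<alpha>f \<alpha>t \<alpha>g \<alpha>c X Xh Xf Xms g t"
  unfolding At_eq using assms by (simp add: row_abs_nonneg)

lemma avg_on_add: "avg_on \<Omega> (\<lambda>t. f t + h t) = avg_on \<Omega> f + avg_on \<Omega> h"
  unfolding avg_on_def by (simp add: sum.distrib add_divide_distrib)
lemma avg_on_cmul: "avg_on \<Omega> (\<lambda>t. c * f t) = c * avg_on \<Omega> f"
  unfolding avg_on_def by (simp add: sum_distrib_left[symmetric])
lemma avg_add: "avg T (\<lambda>t. f t + h t) = avg T f + avg T h"
  unfolding avg_def by (simp add: sum.distrib add_divide_distrib)
lemma avg_cmul: "avg T (\<lambda>t. c * f t) = c * avg T f"
  unfolding avg_def by (simp add: sum_distrib_left[symmetric])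
lemma avg_sum: "avg T (\<lambda>t. \<Sum>k\<in>I. f k t) = (\<Sum>k\<in>I. avg T (f k))"
  unfolding avg_def by (simp add: sum.swap[of _ I] sum_divide_distrib)

lemma part2:
  assumes "0 \<le> \<alpha>f" "0 \<le> \<alpha>t" "0 \<le> \<alpha>g" "0 \<le> \<alpha>c"
    and "\<Omega> \<subseteq> {1..T} \<and> \<Omega> \<noteq> {} \<and>
        avg_on \<Omega> (row_abs C (arr_diff Xh X)) \<ge> \<delta>t \<and>
        avg_on \<Omega> (row_abs C (arr_diff Xf X)) \<ge> \<delta>f \<and>
        avg_on \<Omega> (row_abs C (arr_diff Xms Xf)) \<ge> \<delta>c"
  shows "avg_on \<Omega> (A_tilde_cyc C \<alpha>f \<alpha>t \<alpha>g \<alpha>c X Xh Xf Xms g) \<ge> \<alpha>t * \<delta>t + \<alpha>f * \<delta>f + \<alpha>c * \<delta>c"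
proof -
  have g: "0 \<le> avg_on \<Omega> (\<lambda>t. \<bar>g t\<bar>)" unfolding avg_on_def by (simp add: sum_nonneg)
  have "avg_on \<Omega> (A_tilde_cyc C \<alpha>f \<alpha>t \<alpha>g \<alpha>c X Xh Xf Xms g)
    = \<alpha>f * avg_on \<Omega> (row_abs C (arr_diff Xf X)) + \<alpha>t * avg_on \<Omega> (row_abs C (arr_diff Xh X))
      + \<alpha>g * avg_on \<Omega> (\<lambda>t. \<bar>g t\<bar>) + \<alpha>c * avg_on \<Omega> (row_abs C (arr_diff Xms Xf))"
    unfolding At_eq avg_on_add avg_on_cmul ..
  moreover have "\<alpha>t * \<delta>t \<le> \<alpha>t * avg_on \<Omega> (row_abs C (arr_diff Xh X))"
    using assms by (intro mult_left_mono) auto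
  moreover have "\<alpha>f * \<delta>f \<le> \<alpha>f * avg_on \<Omega> (row_abs C (arr_diff Xf X))"
    using assms by (intro mult_left_mono) auto
  moreover have "\<alpha>c * \<delta>c \<le> \<alpha>c * avg_on \<Omega> (row_abs C (arr_diff Xms Xf))"
    using assms by (intro mult_left_mono) auto
  moreover have "0 \<le> \<alpha>g * avg_on \<Omega> (\<lambda>t. \<bar>g t\<bar>)" using g assms by simp
  ultimately show ?thesis by linarith
qed

lemma part3:
  assumes "0 \<le> \<alpha>f" "0 \<le> \<alpha>t" "0 \<le> \<alpha>g" "0 \<le> \<alpha>c"
    and win: "\<forall>t\<in>{1..T}. Win t \<subseteq> {1..T}"
    and wnn: "\<forall>t\<in>{1..T}. \<forall>s\<in>Win t. 0 \<le> w t s"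
    and wsum: "\<forall>t\<in>{1..T}. (\<Sum>s\<in>Win t. w t s) = 1"
    and H: "\<Omega> \<subseteq> {1..T} \<and> \<Omega> \<noteq> {} \<and>
        (\<forall>t\<in>\<Omega>. row_abs C (arr_diff Xh X) t \<ge> \<delta>t \<and>
                 row_abs C (arr_diff Xf X) t \<ge> \<delta>f \<and>
                 row_abs C (arr_diff Xms Xf) t \<ge> \<delta>c)"
    and t: "t \<in> \<Omega>" "Win t \<subseteq> \<Omega>"
  shows "mov_avg Win w (A_tilde_cyc C \<alpha>f \<alpha>t \<alpha>g \<alpha>c X Xh Xf Xms g) t
             \<ge> \<alpha>t * \<delta>t + \<alpha>f * \<delta>f + \<alpha>c * \<delta>c"
proof -
  let ?D = "\<alpha>t * \<delta>t + \<alpha>f * \<delta>f + \<alpha>c * \<delta>c"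
  have tT: "t \<in> {1..T}" using H t by auto
  have each: "?D \<le> A_tilde_cyc C \<alpha>f \<alpha>t \<alpha>g \<alpha>c X Xh Xf Xms g s" if "s \<in> \<Omega>" for s
  proof -
    have "\<alpha>t * \<delta>t \<le> \<alpha>t * row_abs C (arr_diff Xh X) s"
      using assms that by (intro mult_left_mono) auto
    moreover have "\<alpha>f * \<delta>f \<le> \<alpha>f * row_abs C (arr_diff Xf X) s"
      using assms that by (intro mult_left_mono) auto
    moreover have "\<alpha>c * \<delta>c \<le> \<alpha>c * row_abs C (arr_diff Xms Xf) s"
      using assms that by (intro mult_left_mono) auto
    moreover have "0 \<le> \<alpha>g * \<bar>g s\<bar>" using assms by simp
    ultimately show ?thesis unfolding At_eq by linarith
  qed
  have "?D = (\<Sum>s\<in>Win t. w t s * ?D)" using wsum tT by (simp add: sum_distrib_right[symmetric])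
  also have "\<dots> \<le> (\<Sum>s\<in>Win t. w t s * A_tilde_cyc C \<alpha>f \<alpha>t \<alpha>g \<alpha>c X Xh Xf Xms g s)"
    using wnn tT t(2) each by (intro sum_mono mult_left_mono) auto
  finally show ?thesis unfolding mov_avg_def .
qed



lemma huber_nonneg: "0 \<le> huber r"
  unfolding huber_def by auto

lemma abs_le_huber: "\<bar>r\<bar> \<le> huber r + 1/2"
proof (cases "\<bar>r\<bar> < 1")
  case True
  have "0 \<le> (\<bar>r\<bar> - 1)^2" by simp
  also have "(\<bar>r\<bar> - 1)^2 = r^2 - 2*\<bar>r\<bar> + 1" by (simp add: power2_diff)
  finally show ?thesis using True unfolding huber_def by simp
next
  case False then show ?thesis unfolding huber_def by simp
qed

lemma loss_arr_nonneg: "0 \<le> loss_arr T C Y Z"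
  unfolding loss_arr_def by (simp add: sum_nonneg huber_nonneg)
lemma loss_vec_nonneg: "0 \<le> loss_vec N Y Z"
  unfolding loss_vec_def by (simp add: sum_nonneg huber_nonneg)

lemma row_sum_bound:
  assumes "T \<ge> 1" "C \<ge> 1"
  shows "(\<Sum>t\<in>{1..T}. row_abs C (arr_diff Y Z) t) \<le> real (T*C) * loss_arr T C Y Z + real (T*C)/2"
proof -
  have "(\<Sum>t\<in>{1..T}. row_abs C (arr_diff Y Z) t) \<le> (\<Sum>t\<in>{1..T}. \<Sum>c\<in>{1..C}. huber (Y t c - Z t c) + 1/2)"
    unfolding row_abs_def arr_diff_def by (intro sum_mono abs_le_huber)
  also have "\<dots> = (\<Sum>t\<in>{1..T}. \<Sum>c\<in>{1..C}. huber (Y t c - Z t c)) + real (T*C)/2"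
    by (simp add: sum.distrib)
  also have "(\<Sum>t\<in>{1..T}. \<Sum>c\<in>{1..C}. huber (Y t c - Z t c)) = real (T*C) * loss_arr T C Y Z"
    using assms unfolding loss_arr_def by simp
  finally show ?thesis .
qed

lemma avg_row_bound:
  assumes "T \<ge> 1" "C \<ge> 1"
  shows "avg T (row_abs C (arr_diff Y Z)) \<le> real C * loss_arr T C Y Z + real C/2"
proof -
  have "avg T (row_abs C (arr_diff Y Z)) \<le> (real (T*C) * loss_arr T C Y Z + real (T*C)/2) / real T"
    unfolding avg_def using row_sum_bound[OF assms] assms by (intro divide_right_mono) auto
  also have "\<dots> = real C * loss_arr T C Y Z + real C/2" using assms by (simp add: field_simps)
  finally show ?thesis .
qed

lemma entry_le_frob:
  assumes "t \<in> {1..T}" "c \<in> {1..C}"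
  shows "\<bar>D t c\<bar> \<le> frob T C D"
proof -
  have "(D t c)^2 \<le> (\<Sum>c\<in>{1..C}. (D t c)^2)"
    using assms by (intro member_le_sum) auto
  also have "\<dots> \<le> (\<Sum>t\<in>{1..T}. \<Sum>c\<in>{1..C}. (D t c)^2)"
    using assms by (intro member_le_sum[where f = "\<lambda>t. \<Sum>c\<in>{1..C}. (D t c)^2"] sum_nonneg) auto
  finally show ?thesis unfolding frob_def by (metis real_sqrt_abs real_sqrt_le_mono)
qed

lemma sum_row_le_frob:
  "(\<Sum>t\<in>{1..T}. row_abs C D t) \<le> real (T*C) * frob T C D"
proof -
  have "(\<Sum>t\<in>{1..T}. row_abs C D t) \<le> (\<Sum>t\<in>{1..T}. \<Sum>c\<in>{1..C}. frob T C D)"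
    unfolding row_abs_def by (intro sum_mono entry_le_frob) auto
  then show ?thesis by simp
qed

lemma lin_map_diff: "lin_map Wc T C (arr_diff Y Z) n = lin_map Wc T C Y n - lin_map Wc T C Z n"
  unfolding lin_map_def arr_diff_def by (simp add: right_diff_distrib sum_subtractf)

lemma vnorm_le_l1: "vnorm N v \<le> (\<Sum>n\<in>{1..N}. \<bar>v n\<bar>)"
  using L2_set_le_sum_abs[of v "{1..N}"] unfolding vnorm_def L2_set_def .

lemma avg_Xh_bound:
  assumes "T \<ge> 1" "C \<ge> 1" "0 < A"
    and frame: "\<forall>Y. sqrt A * frob T C Y \<le> vnorm N (lin_map Wc T C Y)
                     \<and> vnorm N (lin_map Wc T C Y) \<le> sqrt B * frob T C Y"
  shows "avg T (row_abs C (arr_diff Xh X)) \<le> real C * real N / sqrt A * loss_vec N (lin_map Wc T C Xh) (lin_map Wc T C X) + real C * real N / (2 * sqrt A)"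
proof -
  let ?D = "arr_diff Xh X"
  let ?lv = "loss_vec N (lin_map Wc T C Xh) (lin_map Wc T C X)"
  have sA: "sqrt A > 0" using assms by simp
  have "sqrt A * frob T C ?D \<le> vnorm N (lin_map Wc T C ?D)" using frame by blast
  also have "\<dots> \<le> (\<Sum>n\<in>{1..N}. \<bar>lin_map Wc T C ?D n\<bar>)" by (rule vnorm_le_l1)
  also have "\<dots> \<le> (\<Sum>n\<in>{1..N}. huber (lin_map Wc T C Xh n - lin_map Wc T C X n) + 1/2)"
    unfolding lin_map_diff by (intro sum_mono abs_le_huber)
  also have "\<dots> = (\<Sum>n\<in>{1..N}. huber (lin_map Wc T C Xh n - lin_map Wc T C X n)) + real N / 2"
    by (simp add: sum.distrib)
  also have "(\<Sum>n\<in>{1..N}. huber (lin_map Wc T C Xh n - lin_map Wc T C X n)) = real N * ?lv"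
    by (cases "N = 0") (simp_all add: loss_vec_def)
  finally have fr: "frob T C ?D \<le> (real N * ?lv + real N / 2) / sqrt A"
    using sA by (simp add: field_simps)
  have "avg T (row_abs C ?D) \<le> real (T*C) * frob T C ?D / real T"
    unfolding avg_def using assms by (intro divide_right_mono sum_row_le_frob) auto
  also have "\<dots> = real C * frob T C ?D" using assms by simp
  also have "\<dots> \<le> real C * ((real N * ?lv + real N / 2) / sqrt A)"
    using fr by (intro mult_left_mono) auto
  also have "\<dots> = real C * real N / sqrt A * ?lv + real C * real N / (2 * sqrt A)"
    using sA by (simp add: field_simps)
  finally show ?thesis .
qed

definition SU :: "(nat \<Rightarrow> nat \<Rightarrow> nat \<Rightarrow> real) \<Rightarrow> nat \<Rightarrow> (nat \<Rightarrow> nat) \<Rightarrow> nat \<Rightarrow> real" where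
  "SU U T Tk k = (\<Sum>t\<in>{1..T}. \<Sum>s\<in>{1..Tk k}. \<bar>U k t s\<bar>)"

lemma SU_nonneg: "0 \<le> SU U T Tk k" unfolding SU_def by (simp add: sum_nonneg)

lemma U_le_SU:
  assumes "t \<in> {1..T}" "s \<in> {1..Tk k}"
  shows "\<bar>U k t s\<bar> \<le> SU U T Tk k"
proof -
  have "\<bar>U k t s\<bar> \<le> (\<Sum>s\<in>{1..Tk k}. \<bar>U k t s\<bar>)"
    using assms by (intro member_le_sum) auto
  also have "\<dots> \<le> SU U T Tk k" unfolding SU_def
    using assms by (intro member_le_sum[where f = "\<lambda>t. \<Sum>s\<in>{1..Tk k}. \<bar>U k t s\<bar>"] sum_nonneg) auto
  finally show ?thesis .
qed

lemma avg_up_bound: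
  assumes "T \<ge> 1" "\<forall>s. 0 \<le> r s"
  shows "avg T (upsample (U k) (Tk k) r) \<le> SU U T Tk k * (\<Sum>s\<in>{1..Tk k}. r s)"
proof -
  have "(\<Sum>t\<in>{1..T}. upsample (U k) (Tk k) r t) \<le> (\<Sum>t\<in>{1..T}. \<Sum>s\<in>{1..Tk k}. SU U T Tk k * r s)"
    unfolding upsample_def
  proof (intro sum_mono)
    fix t s assume ts: "t \<in> {1..T}" "s \<in> {1..Tk k}"
    have "U k t s * r s \<le> \<bar>U k t s\<bar> * r s" using assms by (intro mult_right_mono) auto
    also have "\<dots> \<le> SU U T Tk k * r s" using assms U_le_SU[of t T s Tk k U, OF ts] by (intro mult_right_mono) auto
    finally show "U k t s * r s \<le> SU U T Tk k * r s" .
  qed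
  also have "\<dots> = real T * (SU U T Tk k * (\<Sum>s\<in>{1..Tk k}. r s))"
    by (simp add: sum_distrib_left)
  finally show ?thesis unfolding avg_def using assms by (simp add: field_simps)
qed



lemma avg_lin2: "avg T (\<lambda>t. a * F t + b * G t) = a * avg T F + b * avg T G"
  unfolding avg_def by (simp add: sum.distrib sum_distrib_left[symmetric] add_divide_distrib)

lemma Ams_eq: "A_ms C K U Tk X Xms Xk Xmsk = (\<lambda>t. row_abs C (arr_diff Xms X) t
     + (\<Sum>k\<in>{2..K}. upsample (U k) (Tk k) (row_abs C (arr_diff (Xmsk k) (Xk k))) t))"
  by (rule ext) (simp add: A_ms_def)

lemma part1:
  fixes T C K N :: nat
  assumes T1: "T \<ge> 1" and C1: "C \<ge> 1"
    and Tk1: "\<forall>k\<in>{2..K}. Tk k \<ge> 1"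
    and A0: "0 < A"
    and frame: "\<forall>Y. sqrt A * frob T C Y \<le> vnorm N (lin_map Wc T C Y)
                     \<and> vnorm N (lin_map Wc T C Y) \<le> sqrt B * frob T C Y"
    and \<rho>1: "\<rho> \<ge> 1"
    and \<rho>: "\<forall>u. (\<forall>t\<in>{1..T}. 0 \<le> u t) \<longrightarrow> avg T (mov_avg Win w u) \<le> \<rho> * avg T u"
    and \<alpha>nn: "0 \<le> \<alpha>f" "0 \<le> \<alpha>t" "0 \<le> \<alpha>g" "0 \<le> \<alpha>c" "0 \<le> \<alpha>cyc" "0 \<le> \<alpha>ms"
    and \<omega>pos: "\<forall>k\<in>{2..K}. 0 < \<omega> k" "0 < \<omega>full"
    and Hms: "L_ms T C K Tk \<omega> \<omega>full X Xms Xk Xmsk \<le> \<epsilon>ms"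
    and Hcyc: "L_cyc T C N Wc X Xh Xf \<le> \<epsilon>cyc"
    and Hcons: "L_cons T C Xms Xf \<le> \<epsilon>cons"
    and M1: "M1 = real C / \<omega>full + (\<Sum>k\<in>{2..K}. SU U T Tk k * real (Tk k) * real C / \<omega> k)"
    and M0: "M0 = real C / 2 + (\<Sum>k\<in>{2..K}. SU U T Tk k * real (Tk k) * real C / 2)"
  shows "avg T (\<lambda>t. \<alpha>cyc * mov_avg Win w (A_tilde_cyc C \<alpha>f \<alpha>t \<alpha>g \<alpha>c X Xh Xf Xms g) t
                      + \<alpha>ms * A_ms C K U Tk X Xms Xk Xmsk t)
             \<le> (\<alpha>ms * M1) * \<epsilon>ms + \<rho> * (\<alpha>cyc * (\<alpha>f * real C + \<alpha>t * (real C * real N / sqrt A))) * \<epsilon>cyc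
                + \<rho> * (\<alpha>cyc * \<alpha>c * real C) * \<epsilon>cons
                + \<rho> * \<alpha>cyc * \<alpha>g * avg T (\<lambda>t. \<bar>g t\<bar>)
                + (\<rho> * \<alpha>cyc * (\<alpha>f * real C / 2 + \<alpha>t * (real C * real N / (2 * sqrt A)) + \<alpha>c * real C / 2) + \<alpha>ms * M0)"
proof -
  let ?At = "A_tilde_cyc C \<alpha>f \<alpha>t \<alpha>g \<alpha>c X Xh Xf Xms g"
  let ?lv = "loss_vec N (lin_map Wc T C Xh) (lin_map Wc T C X)"
  let ?lf = "loss_arr T C Xf X"
  let ?lc = "loss_arr T C Xms Xf"
  let ?lfull = "loss_arr T C Xms X"
  let ?lk = "\<lambda>k. loss_arr (Tk k) C (Xmsk k) (Xk k)"
  let ?a1 = "avg T (row_abs C (arr_diff Xf X))"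
  let ?a2 = "avg T (row_abs C (arr_diff Xh X))"
  let ?a3 = "avg T (row_abs C (arr_diff Xms Xf))"
  let ?ag = "avg T (\<lambda>t. \<bar>g t\<bar>)"
  let ?cN = "real C * real N / sqrt A"
  have sA: "sqrt A > 0" using A0 by simp
  have cN0: "0 \<le> ?cN" using sA by simp
  have lv: "?lv \<le> \<epsilon>cyc" and lf: "?lf \<le> \<epsilon>cyc"
    using Hcyc loss_vec_nonneg[of N] loss_arr_nonneg[of T C] unfolding L_cyc_def by (smt (verit))+
  have lc: "?lc \<le> \<epsilon>cons" using Hcons unfolding L_cons_def .
  have sumk0: "0 \<le> (\<Sum>k\<in>{2..K}. \<omega> k * ?lk k)"
    using \<omega>pos(1) by (intro sum_nonneg mult_nonneg_nonneg loss_arr_nonneg) (simp add: less_imp_le)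
  have "\<omega>full * ?lfull \<le> \<epsilon>ms" using Hms sumk0 unfolding L_ms_def by simp
  then have lfull: "?lfull \<le> \<epsilon>ms / \<omega>full" using \<omega>pos by (simp add: field_simps)
  have lk: "?lk k \<le> \<epsilon>ms / \<omega> k" if k: "k \<in> {2..K}" for k
  proof -
    have "\<omega> k * ?lk k \<le> (\<Sum>k\<in>{2..K}. \<omega> k * ?lk k)"
      using k \<omega>pos(1) by (intro member_le_sum mult_nonneg_nonneg loss_arr_nonneg) (auto simp: less_imp_le)
    also have "\<dots> \<le> \<epsilon>ms" using Hms \<omega>pos loss_arr_nonneg[of T C Xms X] unfolding L_ms_def
      by (smt (verit) mult_nonneg_nonneg)
    finally show ?thesis using \<omega>pos k by (simp add: field_simps)
  qed
  have a1: "?a1 \<le> real C * \<epsilon>cyc + real C / 2"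
    using avg_row_bound[OF T1 C1, of Xf X] lf by (smt (verit) mult_left_mono of_nat_0_le_iff)
  have a3: "?a3 \<le> real C * \<epsilon>cons + real C / 2"
    using avg_row_bound[OF T1 C1, of Xms Xf] lc by (smt (verit) mult_left_mono of_nat_0_le_iff)
  have a2: "?a2 \<le> ?cN * \<epsilon>cyc + real C * real N / (2 * sqrt A)"
    using avg_Xh_bound[OF T1 C1 A0 frame, of Xh X] lv mult_left_mono[OF lv cN0] by linarith
  have atE: "avg T ?At = \<alpha>f * ?a1 + \<alpha>t * ?a2 + \<alpha>g * ?ag + \<alpha>c * ?a3"
    unfolding At_eq avg_add avg_cmul ..
  have "avg T ?At \<le> \<alpha>f * (real C * \<epsilon>cyc + real C / 2) + \<alpha>t * (?cN * \<epsilon>cyc + real C * real N / (2 * sqrt A))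
       + \<alpha>g * ?ag + \<alpha>c * (real C * \<epsilon>cons + real C / 2)" (is "_ \<le> ?E")
    unfolding atE using a1 a2 a3 \<alpha>nn
    by (intro add_mono mult_left_mono order_refl) auto
  moreover have "avg T (mov_avg Win w ?At) \<le> \<rho> * avg T ?At"
    using \<rho> At_nonneg[OF \<alpha>nn(1-4)] by blast
  ultimately have ma: "avg T (mov_avg Win w ?At) \<le> \<rho> * ?E"
    using \<rho>1 by (smt (verit) mult_left_mono)
  have ms0: "avg T (row_abs C (arr_diff Xms X)) \<le> real C / \<omega>full * \<epsilon>ms + real C / 2"
  proof -
    have "real C * ?lfull \<le> real C * (\<epsilon>ms / \<omega>full)" using lfull by (intro mult_left_mono) auto
    then show ?thesis using avg_row_bound[OF T1 C1, of Xms X] by simp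
  qed
  have msk: "avg T (upsample (U k) (Tk k) (row_abs C (arr_diff (Xmsk k) (Xk k))))
     \<le> SU U T Tk k * real (Tk k) * real C / \<omega> k * \<epsilon>ms + SU U T Tk k * real (Tk k) * real C / 2"
    if k: "k \<in> {2..K}" for k
  proof -
    have "avg T (upsample (U k) (Tk k) (row_abs C (arr_diff (Xmsk k) (Xk k))))
      \<le> SU U T Tk k * (\<Sum>s\<in>{1..Tk k}. row_abs C (arr_diff (Xmsk k) (Xk k)) s)"
      using T1 row_abs_nonneg by (intro avg_up_bound) auto
    also have "\<dots> \<le> SU U T Tk k * (real (Tk k * C) * ?lk k + real (Tk k * C) / 2)"
      using row_sum_bound[of "Tk k" C] Tk1 k C1 SU_nonneg by (intro mult_left_mono) auto
    also have "\<dots> \<le> SU U T Tk k * (real (Tk k * C) * (\<epsilon>ms / \<omega> k) + real (Tk k * C) / 2)"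
      using lk[OF k] SU_nonneg by (intro mult_left_mono add_mono order_refl) auto
    also have "\<dots> = SU U T Tk k * real (Tk k) * real C / \<omega> k * \<epsilon>ms + SU U T Tk k * real (Tk k) * real C / 2"
      by (simp add: algebra_simps)
    finally show ?thesis .
  qed
  have "avg T (A_ms C K U Tk X Xms Xk Xmsk) = avg T (row_abs C (arr_diff Xms X))
     + (\<Sum>k\<in>{2..K}. avg T (upsample (U k) (Tk k) (row_abs C (arr_diff (Xmsk k) (Xk k)))))"
    unfolding Ams_eq avg_add avg_sum ..
  also have "\<dots> \<le> (real C / \<omega>full * \<epsilon>ms + real C / 2)
     + (\<Sum>k\<in>{2..K}. SU U T Tk k * real (Tk k) * real C / \<omega> k * \<epsilon>ms + SU U T Tk k * real (Tk k) * real C / 2)"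
    using ms0 msk by (intro add_mono sum_mono) auto
  also have "\<dots> = M1 * \<epsilon>ms + M0"
    unfolding M1 M0 sum.distrib sum_distrib_right[symmetric] by (simp add: algebra_simps)
  finally have ams: "avg T (A_ms C K U Tk X Xms Xk Xmsk) \<le> M1 * \<epsilon>ms + M0" .
  have "avg T (\<lambda>t. \<alpha>cyc * mov_avg Win w ?At t + \<alpha>ms * A_ms C K U Tk X Xms Xk Xmsk t)
    = \<alpha>cyc * avg T (mov_avg Win w ?At) + \<alpha>ms * avg T (A_ms C K U Tk X Xms Xk Xmsk)"
    by (rule avg_lin2)
  also have "\<dots> \<le> \<alpha>cyc * (\<rho> * ?E) + \<alpha>ms * (M1 * \<epsilon>ms + M0)"
    using ma ams \<alpha>nn by (intro add_mono mult_left_mono) auto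
  also have "\<dots> = (\<alpha>ms * M1) * \<epsilon>ms + \<rho> * (\<alpha>cyc * (\<alpha>f * real C + \<alpha>t * (real C * real N / sqrt A))) * \<epsilon>cyc
                + \<rho> * (\<alpha>cyc * \<alpha>c * real C) * \<epsilon>cons
                + \<rho> * \<alpha>cyc * \<alpha>g * avg T (\<lambda>t. \<bar>g t\<bar>)
                + (\<rho> * \<alpha>cyc * (\<alpha>f * real C / 2 + \<alpha>t * (real C * real N / (2 * sqrt A)) + \<alpha>c * real C / 2) + \<alpha>ms * M0)"
    by (simp add: algebra_simps)
  finally show ?thesis .
qed


lemma M1_nonneg:
  assumes "\<forall>k\<in>{2..K}. 0 < \<omega> k" "0 < \<omega>full"
  shows "0 \<le> real C / \<omega>full + (\<Sum>k\<in>{2..K}. SU U T Tk k * real (Tk k) * real C / \<omega> k)"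
proof -
  have "0 \<le> (\<Sum>k\<in>{2..K}. SU U T Tk k * real (Tk k) * real C / \<omega> k)"
    using assms(1) SU_nonneg by (intro sum_nonneg divide_nonneg_nonneg mult_nonneg_nonneg) (auto simp: less_imp_le)
  then show ?thesis using assms(2) by simp
qed

lemma M0_nonneg:
  shows "0 \<le> real C / 2 + (\<Sum>k\<in>{2..K}. SU U T Tk k * real (Tk k) * real C / 2)"
  using SU_nonneg by (intro add_nonneg_nonneg sum_nonneg divide_nonneg_nonneg mult_nonneg_nonneg) auto

lemma K0_nonneg:
  assumes "0 \<le> \<alpha>f" "0 \<le> \<alpha>t" "0 \<le> \<alpha>g" "0 \<le> \<alpha>c" "0 \<le> \<alpha>cyc" "0 \<le> \<alpha>ms" "0 < A" "1 \<le> (\<rho>::real)"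
  shows "0 \<le> \<rho> * \<alpha>cyc * (\<alpha>f * real C / 2 + \<alpha>t * (real C * real N / (2 * sqrt A)) + \<alpha>c * real C / 2) + \<alpha>ms * (real C / 2 + (\<Sum>k\<in>{2..K}. SU U T Tk k * real (Tk k) * real C / 2))"
proof -
  have "0 \<le> \<alpha>f * real C / 2 + \<alpha>t * (real C * real N / (2 * sqrt A)) + \<alpha>c * real C / 2"
    using assms by (intro add_nonneg_nonneg mult_nonneg_nonneg divide_nonneg_nonneg) auto
  moreover have "0 \<le> \<rho> * \<alpha>cyc" using assms by simp
  moreover have "0 \<le> \<alpha>ms * (real C / 2 + (\<Sum>k\<in>{2..K}. SU U T Tk k * real (Tk k) * real C / 2))"
    using assms(6) M0_nonneg by (rule mult_nonneg_nonneg)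
  ultimately show ?thesis by (simp add: add_nonneg_nonneg)
qed

theorem lemma3:
  fixes T C K N :: nat
    and Tk :: "nat \<Rightarrow> nat"
    and Wc :: "nat \<Rightarrow> nat \<Rightarrow> nat \<Rightarrow> real"
    and A B :: real
    and U :: "nat \<Rightarrow> nat \<Rightarrow> nat \<Rightarrow> real"
    and Win :: "nat \<Rightarrow> nat set"
    and w :: "nat \<Rightarrow> nat \<Rightarrow> real"
    and \<rho> :: real
    and \<alpha>f \<alpha>t \<alpha>g \<alpha>c \<alpha>cyc \<alpha>ms \<omega>full :: real
    and \<omega> :: "nat \<Rightarrow> real"
  assumes T1: "T \<ge> 1" and C1: "C \<ge> 1" and K1: "K \<ge> 1"
    and Tk1: "\<forall>k\<in>{2..K}. Tk k \<ge> 1"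
    and AB: "0 < A" "A \<le> B"
    and frame: "\<forall>Y. sqrt A * frob T C Y \<le> vnorm N (lin_map Wc T C Y)
                     \<and> vnorm N (lin_map Wc T C Y) \<le> sqrt B * frob T C Y"
    and win: "\<forall>t\<in>{1..T}. Win t \<subseteq> {1..T}"
    and wnn: "\<forall>t\<in>{1..T}. \<forall>s\<in>Win t. 0 \<le> w t s"
    and wsum: "\<forall>t\<in>{1..T}. (\<Sum>s\<in>Win t. w t s) = 1"
    and \<rho>1: "\<rho> \<ge> 1"
    and \<rho>: "\<forall>u. (\<forall>t\<in>{1..T}. 0 \<le> u t) \<longrightarrow> avg T (mov_avg Win w u) \<le> \<rho> * avg T u"
    and \<alpha>nn: "0 \<le> \<alpha>f" "0 \<le> \<alpha>t" "0 \<le> \<alpha>g" "0 \<le> \<alpha>c" "0 \<le> \<alpha>cyc" "0 \<le> \<alpha>ms"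
    and \<omega>pos: "\<forall>k\<in>{2..K}. 0 < \<omega> k" "0 < \<omega>full"
    and \<omega>sum: "(\<Sum>k\<in>{2..K}. \<omega> k) + \<omega>full = 1"
  shows
    "(\<exists>\<kappa>ms \<kappa>cyc \<kappa>cons \<kappa>g \<kappa>0 :: real.
        0 \<le> \<kappa>ms \<and> 0 \<le> \<kappa>cyc \<and> 0 \<le> \<kappa>cons \<and> 0 \<le> \<kappa>g \<and> 0 \<le> \<kappa>0 \<and>
        (\<forall>(X :: nat \<Rightarrow> nat \<Rightarrow> real) Xh Xf Xms (Xk :: nat \<Rightarrow> nat \<Rightarrow> nat \<Rightarrow> real) Xmsk
           (g :: nat \<Rightarrow> real) \<epsilon>ms \<epsilon>cyc \<epsilon>cons.
           L_ms T C K Tk \<omega> \<omega>full X Xms Xk Xmsk \<le> \<epsilon>ms \<and>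
           L_cyc T C N Wc X Xh Xf \<le> \<epsilon>cyc \<and>
           L_cons T C Xms Xf \<le> \<epsilon>cons \<longrightarrow>
           avg T (\<lambda>t. \<alpha>cyc * mov_avg Win w (A_tilde_cyc C \<alpha>f \<alpha>t \<alpha>g \<alpha>c X Xh Xf Xms g) t
                      + \<alpha>ms * A_ms C K U Tk X Xms Xk Xmsk t)
             \<le> \<kappa>ms * \<epsilon>ms + \<rho> * \<kappa>cyc * \<epsilon>cyc + \<rho> * \<kappa>cons * \<epsilon>cons
                + \<rho> * \<kappa>g * \<alpha>g * avg T (\<lambda>t. \<bar>g t\<bar>) + \<kappa>0))
     \<and>
     (\<forall>(X :: nat \<Rightarrow> nat \<Rightarrow> real) Xh Xf Xms (g :: nat \<Rightarrow> real) \<Omega> \<delta>t \<delta>f \<delta>c.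
        \<Omega> \<subseteq> {1..T} \<and> \<Omega> \<noteq> {} \<and>
        avg_on \<Omega> (row_abs C (arr_diff Xh X)) \<ge> \<delta>t \<and>
        avg_on \<Omega> (row_abs C (arr_diff Xf X)) \<ge> \<delta>f \<and>
        avg_on \<Omega> (row_abs C (arr_diff Xms Xf)) \<ge> \<delta>c \<longrightarrow>
        avg_on \<Omega> (A_tilde_cyc C \<alpha>f \<alpha>t \<alpha>g \<alpha>c X Xh Xf Xms g) \<ge> \<alpha>t * \<delta>t + \<alpha>f * \<delta>f + \<alpha>c * \<delta>c)
     \<and>
     (\<forall>(X :: nat \<Rightarrow> nat \<Rightarrow> real) Xh Xf Xms (g :: nat \<Rightarrow> real) \<Omega> \<delta>t \<delta>f \<delta>c.
        \<Omega> \<subseteq> {1..T} \<and> \<Omega> \<noteq> {} \<and>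
        (\<forall>t\<in>\<Omega>. row_abs C (arr_diff Xh X) t \<ge> \<delta>t \<and>
                 row_abs C (arr_diff Xf X) t \<ge> \<delta>f \<and>
                 row_abs C (arr_diff Xms Xf) t \<ge> \<delta>c) \<longrightarrow>
        (\<forall>t\<in>\<Omega>. Win t \<subseteq> \<Omega> \<longrightarrow>
           mov_avg Win w (A_tilde_cyc C \<alpha>f \<alpha>t \<alpha>g \<alpha>c X Xh Xf Xms g) t
             \<ge> \<alpha>t * \<delta>t + \<alpha>f * \<delta>f + \<alpha>c * \<delta>c))
     \<and>
     (\<forall>(S :: 'a set) (pt :: nat \<Rightarrow> 'a \<Rightarrow> real) pf \<Omega> \<delta>p.
        finite S \<and> \<Omega> \<subseteq> {1..T} \<and> \<Omega> \<noteq> {} \<and> 0 \<le> \<delta>p \<and>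
        (\<forall>t\<in>\<Omega>. prob_vec S (pt t) \<and> prob_vec S (pf t) \<and> l1dist S (pt t) (pf t) \<ge> \<delta>p) \<longrightarrow>
        avg_on \<Omega> (\<lambda>t. JS S (pt t) (pf t)) \<ge> \<delta>p\<^sup>2 / 8)"
  apply (intro conjI)
  subgoal
    apply (rule exI[of _ "\<alpha>ms * (real C / \<omega>full + (\<Sum>k\<in>{2..K}. SU U T Tk k * real (Tk k) * real C / \<omega> k))"])
    apply (rule exI[of _ "\<alpha>cyc * (\<alpha>f * real C + \<alpha>t * (real C * real N / sqrt A))"])
    apply (rule exI[of _ "\<alpha>cyc * \<alpha>c * real C"])
    apply (rule exI[of _ "\<alpha>cyc"])
    apply (rule exI[of _ "\<rho> * \<alpha>cyc * (\<alpha>f * real C / 2 + \<alpha>t * (real C * real N / (2 * sqrt A)) + \<alpha>c * real C / 2) + \<alpha>ms * (real C / 2 + (\<Sum>k\<in>{2..K}. SU U T Tk k * real (Tk k) * real C / 2))"])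
    apply (intro conjI allI impI)
         apply (rule mult_nonneg_nonneg[OF \<alpha>nn(6) M1_nonneg[OF \<omega>pos]])
        using \<alpha>nn AB apply simp
       using \<alpha>nn apply simp
      using \<alpha>nn apply simp
     apply (rule K0_nonneg[OF \<alpha>nn AB(1) \<rho>1])
    apply (elim conjE)
    apply (rule part1[OF T1 C1 Tk1 AB(1) frame \<rho>1 \<rho> \<alpha>nn \<omega>pos _ _ _ refl refl])
      apply assumption+
    done
  subgoal
    apply (intro allI impI)
    apply (rule part2[OF \<alpha>nn(1-4)])
    apply assumption
    done
  subgoal
    apply (intro allI impI ballI)
    apply (rule part3[OF \<alpha>nn(1-4) win wnn wsum])
      apply assumption+
    done
  subgoal
    apply (intro allI impI)
    apply (elim conjE)
    apply (rule part4)
        apply assumption+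
    done
  done

end
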